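(* Let $D$ be a $3$-dicritical semi-complete digraph. Then $D$ does not contain any tournament of $\mathcal{T}_8$ as an induced subdigraph.
   Context: A digraph is semi-complete if every two distinct vertices are joined by at least one arc. A $2$-dicolouring is a map to $\{1,2\}$ whose colour classes induce acyclic subdigraphs. $D$ is $3$-dicritical if $D$ has no $2$-dicolouring but every proper subdigraph has one. $TT_8$ is the acyclic tournament on 8 vertices, and $\mathcal{T}_8$ is the set of tournaments obtained from $TT_8$ by reversing exactly one arc. *)

theory Defs
  imports Main
begin

text \<open>A digraph is a finite vertex set V with an arc set A \<subseteq> V \<times> V, without loops
  (digons, i.e. both (u,v) and (v,u), are allowed; no parallel arcs).\<close>
definition digraph :: "'a set \<Rightarrow> ('a \<times> 'a) set \<Rightarrow> bool" where
  "digraph V A \<longleftrightarrow> finite V \<and> A \<subseteq> V \<times> V \<and> irrefl A"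

definition semicomplete :: "'a set \<Rightarrow> ('a \<times> 'a) set \<Rightarrow> bool" where
  "semicomplete V A \<longleftrightarrow> (\<forall>u\<in>V. \<forall>v\<in>V. u \<noteq> v \<longrightarrow> (u,v) \<in> A \<or> (v,u) \<in> A)"

definition induced_arcs :: "('a \<times> 'a) set \<Rightarrow> 'a set \<Rightarrow> ('a \<times> 'a) set" where
  "induced_arcs A X = A \<inter> (X \<times> X)"

definition two_dicolouring :: "'a set \<Rightarrow> ('a \<times> 'a) set \<Rightarrow> ('a \<Rightarrow> nat) \<Rightarrow> bool" where
  "two_dicolouring V A c \<longleftrightarrow> c ` V \<subseteq> {1, 2} \<and>
     (\<forall>i\<in>{1, 2}. acyclic (induced_arcs A {v\<in>V. c v = i}))"

definition two_dicolourable :: "'a set \<Rightarrow> ('a \<times> 'a) set \<Rightarrow> bool" where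
  "two_dicolourable V A \<longleftrightarrow> (\<exists>c. two_dicolouring V A c)"

definition proper_subdigraph :: "'a set \<Rightarrow> ('a \<times> 'a) set \<Rightarrow> 'a set \<Rightarrow> ('a \<times> 'a) set \<Rightarrow> bool" where
  "proper_subdigraph V' A' V A \<longleftrightarrow> V' \<subseteq> V \<and> A' \<subseteq> A \<and> A' \<subseteq> V' \<times> V' \<and> (V', A') \<noteq> (V, A)"

definition dicritical3 :: "'a set \<Rightarrow> ('a \<times> 'a) set \<Rightarrow> bool" where
  "dicritical3 V A \<longleftrightarrow> digraph V A \<and> \<not> two_dicolourable V A \<and>
     (\<forall>V' A'. proper_subdigraph V' A' V A \<longrightarrow> two_dicolourable V' A')"

definition TT8 :: "(nat \<times> nat) set" where
  "TT8 = {(i, j). i < j \<and> j < 8}"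

text \<open>The tournament of T_8 obtained from TT_8 by reversing the arc (a,b).\<close>
definition T8_rev :: "nat \<Rightarrow> nat \<Rightarrow> (nat \<times> nat) set" where
  "T8_rev a b = (TT8 - {(a, b)}) \<union> {(b, a)}"

definition contains_induced :: "'a set \<Rightarrow> ('a \<times> 'a) set \<Rightarrow> 'b set \<Rightarrow> ('b \<times> 'b) set \<Rightarrow> bool" where
  "contains_induced V A W B \<longleftrightarrow> (\<exists>f. inj_on f W \<and> f ` W \<subseteq> V \<and>
     (\<forall>x\<in>W. \<forall>y\<in>W. (f x, f y) \<in> A \<longleftrightarrow> (x, y) \<in> B))"

end

theory Submission
  imports Defs
begin


lemma acyclic_tri:
  assumes "acyclic R" "(a,b) \<in> R" "(b,c) \<in> R" "(c,a) \<in> R" shows False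
proof -
  have "(a,a) \<in> R\<^sup>+" using assms(2-4) by (meson trancl.r_into_trancl trancl.trancl_into_trancl)
  then show False using assms(1) unfolding acyclic_def by blast
qed

lemma dc_digraph: "dicritical3 V A \<Longrightarrow> digraph V A" by (simp add: dicritical3_def)

lemma dc_irr: "dicritical3 V A \<Longrightarrow> (u,u) \<notin> A"
  by (auto simp: dicritical3_def digraph_def irrefl_def)

lemma dc_sub: "dicritical3 V A \<Longrightarrow> (u,v) \<in> A \<Longrightarrow> u \<in> V \<and> v \<in> V"
  by (auto simp: dicritical3_def digraph_def)

lemma sc_inst: "semicomplete V A \<Longrightarrow> u \<in> V \<Longrightarrow> v \<in> V \<Longrightarrow> u = v \<or> (u,v) \<in> A \<or> (v,u) \<in> A"
  by (auto simp: semicomplete_def)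

lemma key0:
  assumes dc: "dicritical3 V A" and st: "(s,t) \<in> A"
  obtains S K where "S \<subseteq> V" "K = V - S" "acyclic ((A - {(s,t)}) \<inter> S \<times> S)"
    "acyclic (A \<inter> K \<times> K)" "s \<in> S" "t \<in> S" "(t,s) \<in> ((A - {(s,t)}) \<inter> S \<times> S)\<^sup>*"
proof -
  have dg: "digraph V A" and nc: "\<not> two_dicolourable V A"
    and crit: "\<And>V' A'. proper_subdigraph V' A' V A \<Longrightarrow> two_dicolourable V' A'"
    using dc by (auto simp: dicritical3_def)
  have AV: "A \<subseteq> V \<times> V" using dg by (simp add: digraph_def)
  have "proper_subdigraph V (A - {(s,t)}) V A"
    using AV st by (auto simp: proper_subdigraph_def)
  then obtain c where c: "two_dicolouring V (A - {(s,t)}) c"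
    using crit by (auto simp: two_dicolourable_def)
  have cV: "c ` V \<subseteq> {1,2}" and acy: "\<And>i. i \<in> {1,2} \<Longrightarrow> acyclic (induced_arcs (A - {(s,t)}) {v\<in>V. c v = i})"
    using c by (auto simp: two_dicolouring_def)
  have "\<not> two_dicolouring V A c" using nc by (auto simp: two_dicolourable_def)
  then obtain i where i: "i \<in> {1,2}" and nacy: "\<not> acyclic (induced_arcs A {v\<in>V. c v = i})"
    using cV by (auto simp: two_dicolouring_def)
  define S where "S = {v\<in>V. c v = i}"
  define R where "R = (A - {(s,t)}) \<inter> S \<times> S"
  have acR: "acyclic R" using acy[OF i] by (simp add: R_def S_def induced_arcs_def)
  have sS: "s \<in> S \<and> t \<in> S"
  proof (rule ccontr)
    assume "\<not> (s \<in> S \<and> t \<in> S)"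
    then have "induced_arcs A S = R" by (auto simp: induced_arcs_def R_def)
    then show False using nacy acR by (simp add: S_def)
  qed
  have eq: "induced_arcs A S = insert (s,t) R" using sS st by (auto simp: induced_arcs_def R_def)
  obtain x where "(x,x) \<in> (insert (s,t) R)\<^sup>+" using nacy eq unfolding acyclic_def S_def by auto
  then have "(x,x) \<in> R\<^sup>+ \<or> ((x,s) \<in> R\<^sup>* \<and> (t,x) \<in> R\<^sup>*)" by (simp add: trancl_insert)
  then have ts: "(t,s) \<in> R\<^sup>*" using acR unfolding acyclic_def by (meson rtrancl_trans)
  define j where "j = (3::nat) - i"
  have j: "j \<in> {1,2}" "j \<noteq> i" using i by (auto simp: j_def)
  have KV: "{v\<in>V. c v = j} = V - S"
  proof -
    have "\<And>v. v \<in> V \<Longrightarrow> c v = j \<longleftrightarrow> c v \<noteq> i" using cV i j by (auto simp: j_def)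
    then show ?thesis by (auto simp: S_def)
  qed
  have acK: "acyclic (A \<inter> (V - S) \<times> (V - S))"
  proof -
    have "A \<inter> (V - S) \<times> (V - S) = induced_arcs (A - {(s,t)}) {v\<in>V. c v = j}"
      using sS KV by (auto simp: induced_arcs_def)
    then show ?thesis using acy[OF j(1)] by simp
  qed
  show ?thesis
    apply (rule that[of S "V - S"])
    using sS ts acR acK by (auto simp: S_def R_def)
qed

lemma Btri:
  assumes dc: "dicritical3 V A" and st: "(s,t) \<in> A"
    and "(s,p) \<in> A" "(p,t) \<in> A" "(s,q) \<in> A" "(q,t) \<in> A" "(s,r) \<in> A" "(r,t) \<in> A"
    and "(p,q) \<in> A" "(q,r) \<in> A" "(r,p) \<in> A"
  shows False
proof -
  obtain S K where S: "S \<subseteq> V" "K = V - S" "acyclic ((A - {(s,t)}) \<inter> S \<times> S)"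
    "acyclic (A \<inter> K \<times> K)" "s \<in> S" "t \<in> S" "(t,s) \<in> ((A - {(s,t)}) \<inter> S \<times> S)\<^sup>*"
    using key0[OF dc st] by blast
  define R where "R = (A - {(s,t)}) \<inter> S \<times> S"
  have inK: "z \<in> K" if "(s,z) \<in> A" "(z,t) \<in> A" for z
  proof (rule ccontr)
    assume nK: "z \<notin> K"
    have zV: "z \<in> V" using dc_sub[OF dc that(1)] by simp
    then have zS: "z \<in> S" using nK S(2) by simp
    have "z \<noteq> t" "z \<noteq> s" using that dc_irr[OF dc] by auto
    then have "(s,z) \<in> R" "(z,t) \<in> R" using that zS S(5,6) by (auto simp: R_def)
    then have "(s,t) \<in> R\<^sup>+" by auto
    then have "(s,s) \<in> R\<^sup>+" using S(7) unfolding R_def[symmetric] by auto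
    then show False using S(3) unfolding acyclic_def R_def by blast
  qed
  have "p \<in> K" "q \<in> K" "r \<in> K" using inK assms by auto
  then show False using acyclic_tri[OF S(4), of p q r] assms by auto
qed

lemma wit:
  assumes dc: "dicritical3 V A" and sc: "semicomplete V A" and st: "(s,t) \<in> A" and ts: "(t,s) \<notin> A"
  obtains w K where "w \<in> V" "(t,w) \<in> A" "(w,s) \<in> A" "(w,t) \<notin> A" "(s,w) \<notin> A"
    "\<And>z. (s,z) \<in> A \<Longrightarrow> (z,t) \<in> A \<Longrightarrow> z \<in> K"
    "\<And>z. z \<noteq> t \<Longrightarrow> (s,z) \<in> A \<Longrightarrow> (z,w) \<in> A \<Longrightarrow> z \<in> K"
    "\<And>z. z \<noteq> s \<Longrightarrow> (w,z) \<in> A \<Longrightarrow> (z,t) \<in> A \<Longrightarrow> z \<in> K"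
    "\<And>p q r. p \<in> K \<Longrightarrow> q \<in> K \<Longrightarrow> r \<in> K \<Longrightarrow> (p,q) \<in> A \<Longrightarrow> (q,r) \<in> A \<Longrightarrow> (r,p) \<in> A \<Longrightarrow> False"
proof -
  obtain S K where S: "S \<subseteq> V" "K = V - S" "acyclic ((A - {(s,t)}) \<inter> S \<times> S)"
    "acyclic (A \<inter> K \<times> K)" "s \<in> S" "t \<in> S" "(t,s) \<in> ((A - {(s,t)}) \<inter> S \<times> S)\<^sup>*"
    using key0[OF dc st] by blast
  define R where "R = (A - {(s,t)}) \<inter> S \<times> S"
  have acR: "acyclic R" using S(3) by (simp add: R_def)
  have RA: "R \<subseteq> A" by (auto simp: R_def)
  have irr: "\<And>u. (u,u) \<notin> A" using dc_irr[OF dc] by blast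
  have "s \<noteq> t" using st irr by auto
  then have "(t,s) \<in> R\<^sup>+" using S(7) unfolding R_def[symmetric] by (auto simp: rtrancl_eq_or_trancl)
  then obtain w where tw: "(t,w) \<in> R" and ws: "(w,s) \<in> R\<^sup>*"
    by (meson converse_tranclE trancl_into_rtrancl rtrancl.rtrancl_refl)
  have twA: "(t,w) \<in> A" and wS: "w \<in> S" using tw by (auto simp: R_def)
  have wV: "w \<in> V" using wS S(1) by auto
  have wt: "w \<noteq> t" using twA irr by auto
  have wsn: "w \<noteq> s" using tw ts by (auto simp: R_def)
  have ws': "(w,s) \<in> R\<^sup>+" using ws wsn by (auto simp: rtrancl_eq_or_trancl)
  have nwt: "(w,t) \<notin> A"
  proof
    assume "(w,t) \<in> A"
    then have "(w,t) \<in> R" using wsn wS S(6) by (auto simp: R_def)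
    then have "(t,t) \<in> R\<^sup>+" using tw by auto
    then show False using acR unfolding acyclic_def by blast
  qed
  have nsw: "(s,w) \<notin> A"
  proof
    assume "(s,w) \<in> A"
    then have "(s,w) \<in> R" using wt wS S(5) by (auto simp: R_def)
    then have "(w,w) \<in> R\<^sup>+" using ws' by auto
    then show False using acR unfolding acyclic_def by blast
  qed
  have wsA: "(w,s) \<in> A" using sc_inst[OF sc wV, of s] S(1,5) wsn nsw by auto
  have inK: "z \<in> K" if zV: "z \<in> V" and cyc: "z \<in> S \<Longrightarrow> False" for z
    using S(2) zV cyc by auto
  show ?thesis
  proof (rule that[OF wV twA wsA nwt nsw])
    fix z assume a: "(s,z) \<in> A" "(z,t) \<in> A"
    show "z \<in> K"
    proof (rule inK)
      show "z \<in> V" using dc_sub[OF dc a(1)] by simp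
      assume zS: "z \<in> S"
      have "z \<noteq> t" "z \<noteq> s" using a irr by auto
      then have "(s,z) \<in> R" "(z,t) \<in> R" using a zS S(5,6) by (auto simp: R_def)
      then have "(s,s) \<in> R\<^sup>+" using tw ws by (meson rtrancl_into_trancl2 trancl_into_trancl2 trancl_rtrancl_trancl r_into_trancl)
      then show False using acR unfolding acyclic_def by blast
    qed
  next
    fix z assume a: "z \<noteq> t" "(s,z) \<in> A" "(z,w) \<in> A"
    show "z \<in> K"
    proof (rule inK)
      show "z \<in> V" using dc_sub[OF dc a(2)] by simp
      assume zS: "z \<in> S"
      have "z \<noteq> s" using a irr by auto
      then have "(s,z) \<in> R" "(z,w) \<in> R" using a zS S(5) wS wt by (auto simp: R_def)
      then have "(s,s) \<in> R\<^sup>+" using ws by (meson rtrancl_into_trancl2 trancl_into_trancl2 trancl_rtrancl_trancl r_into_trancl)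
      then show False using acR unfolding acyclic_def by blast
    qed
  next
    fix z assume a: "z \<noteq> s" "(w,z) \<in> A" "(z,t) \<in> A"
    show "z \<in> K"
    proof (rule inK)
      show "z \<in> V" using dc_sub[OF dc a(2)] by simp
      assume zS: "z \<in> S"
      then have "(w,z) \<in> R" "(z,t) \<in> R" using a zS S(6) wS wsn by (auto simp: R_def)
      then have "(t,t) \<in> R\<^sup>+" using tw by (meson trancl_into_trancl2 r_into_trancl)
      then show False using acR unfolding acyclic_def by blast
    qed
  next
    fix p q r assume "p \<in> K" "q \<in> K" "r \<in> K" "(p,q) \<in> A" "(q,r) \<in> A" "(r,p) \<in> A"
    then show False using acyclic_tri[OF S(4), of p q r] by auto
  qed
qed

lemma noTT6:
  assumes dc: "dicritical3 V A" and sc: "semicomplete V A"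
    and y0V: "y0 \<in> V"
    and y1V: "y1 \<in> V"
    and y2V: "y2 \<in> V"
    and y3V: "y3 \<in> V"
    and y4V: "y4 \<in> V"
    and y5V: "y5 \<in> V"
    and a_0_1: "(y0,y1) \<in> A"
    and a_0_2: "(y0,y2) \<in> A"
    and a_0_3: "(y0,y3) \<in> A"
    and a_0_4: "(y0,y4) \<in> A"
    and a_0_5: "(y0,y5) \<in> A"
    and n_1_0: "(y1,y0) \<notin> A"
    and a_1_2: "(y1,y2) \<in> A"
    and a_1_3: "(y1,y3) \<in> A"
    and a_1_4: "(y1,y4) \<in> A"
    and a_1_5: "(y1,y5) \<in> A"
    and n_2_0: "(y2,y0) \<notin> A"
    and n_2_1: "(y2,y1) \<notin> A"
    and a_2_3: "(y2,y3) \<in> A"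
    and a_2_4: "(y2,y4) \<in> A"
    and a_2_5: "(y2,y5) \<in> A"
    and n_3_0: "(y3,y0) \<notin> A"
    and n_3_1: "(y3,y1) \<notin> A"
    and n_3_2: "(y3,y2) \<notin> A"
    and a_3_4: "(y3,y4) \<in> A"
    and a_3_5: "(y3,y5) \<in> A"
    and n_4_0: "(y4,y0) \<notin> A"
    and n_4_1: "(y4,y1) \<notin> A"
    and n_4_2: "(y4,y2) \<notin> A"
    and n_4_3: "(y4,y3) \<notin> A"
    and a_4_5: "(y4,y5) \<in> A"
    and n_5_0: "(y5,y0) \<notin> A"
    and n_5_1: "(y5,y1) \<notin> A"
    and n_5_2: "(y5,y2) \<notin> A"
    and n_5_3: "(y5,y3) \<notin> A"
    and n_5_4: "(y5,y4) \<notin> A"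
  shows False
proof -
  obtain w0 K0 where w0V: "w0 \<in> V" and W_0: "(y1,w0) \<in> A" "(w0,y0) \<in> A" "(w0,y1) \<notin> A" "(y0,w0) \<notin> A"
    and M1_0: "\<And>z. (y0,z) \<in> A \<Longrightarrow> (z,y1) \<in> A \<Longrightarrow> z \<in> K0"
    and M2_0: "\<And>z. z \<noteq> y1 \<Longrightarrow> (y0,z) \<in> A \<Longrightarrow> (z,w0) \<in> A \<Longrightarrow> z \<in> K0"
    and M3_0: "\<And>z. z \<noteq> y0 \<Longrightarrow> (w0,z) \<in> A \<Longrightarrow> (z,y1) \<in> A \<Longrightarrow> z \<in> K0"
    and KT_0: "\<And>p q r. p \<in> K0 \<Longrightarrow> q \<in> K0 \<Longrightarrow> r \<in> K0 \<Longrightarrow> (p,q) \<in> A \<Longrightarrow> (q,r) \<in> A \<Longrightarrow> (r,p) \<in> A \<Longrightarrow> False"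
    using wit[OF dc sc a_0_1 n_1_0] by blast
  obtain w1 K1 where w1V: "w1 \<in> V" and W_1: "(y2,w1) \<in> A" "(w1,y1) \<in> A" "(w1,y2) \<notin> A" "(y1,w1) \<notin> A"
    and M1_1: "\<And>z. (y1,z) \<in> A \<Longrightarrow> (z,y2) \<in> A \<Longrightarrow> z \<in> K1"
    and M2_1: "\<And>z. z \<noteq> y2 \<Longrightarrow> (y1,z) \<in> A \<Longrightarrow> (z,w1) \<in> A \<Longrightarrow> z \<in> K1"
    and M3_1: "\<And>z. z \<noteq> y1 \<Longrightarrow> (w1,z) \<in> A \<Longrightarrow> (z,y2) \<in> A \<Longrightarrow> z \<in> K1"
    and KT_1: "\<And>p q r. p \<in> K1 \<Longrightarrow> q \<in> K1 \<Longrightarrow> r \<in> K1 \<Longrightarrow> (p,q) \<in> A \<Longrightarrow> (q,r) \<in> A \<Longrightarrow> (r,p) \<in> A \<Longrightarrow> False"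
    using wit[OF dc sc a_1_2 n_2_1] by blast
  obtain w2 K2 where w2V: "w2 \<in> V" and W_2: "(y3,w2) \<in> A" "(w2,y2) \<in> A" "(w2,y3) \<notin> A" "(y2,w2) \<notin> A"
    and M1_2: "\<And>z. (y2,z) \<in> A \<Longrightarrow> (z,y3) \<in> A \<Longrightarrow> z \<in> K2"
    and M2_2: "\<And>z. z \<noteq> y3 \<Longrightarrow> (y2,z) \<in> A \<Longrightarrow> (z,w2) \<in> A \<Longrightarrow> z \<in> K2"
    and M3_2: "\<And>z. z \<noteq> y2 \<Longrightarrow> (w2,z) \<in> A \<Longrightarrow> (z,y3) \<in> A \<Longrightarrow> z \<in> K2"
    and KT_2: "\<And>p q r. p \<in> K2 \<Longrightarrow> q \<in> K2 \<Longrightarrow> r \<in> K2 \<Longrightarrow> (p,q) \<in> A \<Longrightarrow> (q,r) \<in> A \<Longrightarrow> (r,p) \<in> A \<Longrightarrow> False"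
    using wit[OF dc sc a_2_3 n_3_2] by blast
  obtain w3 K3 where w3V: "w3 \<in> V" and W_3: "(y4,w3) \<in> A" "(w3,y3) \<in> A" "(w3,y4) \<notin> A" "(y3,w3) \<notin> A"
    and M1_3: "\<And>z. (y3,z) \<in> A \<Longrightarrow> (z,y4) \<in> A \<Longrightarrow> z \<in> K3"
    and M2_3: "\<And>z. z \<noteq> y4 \<Longrightarrow> (y3,z) \<in> A \<Longrightarrow> (z,w3) \<in> A \<Longrightarrow> z \<in> K3"
    and M3_3: "\<And>z. z \<noteq> y3 \<Longrightarrow> (w3,z) \<in> A \<Longrightarrow> (z,y4) \<in> A \<Longrightarrow> z \<in> K3"
    and KT_3: "\<And>p q r. p \<in> K3 \<Longrightarrow> q \<in> K3 \<Longrightarrow> r \<in> K3 \<Longrightarrow> (p,q) \<in> A \<Longrightarrow> (q,r) \<in> A \<Longrightarrow> (r,p) \<in> A \<Longrightarrow> False"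
    using wit[OF dc sc a_3_4 n_4_3] by blast
  obtain w4 K4 where w4V: "w4 \<in> V" and W_4: "(y5,w4) \<in> A" "(w4,y4) \<in> A" "(w4,y5) \<notin> A" "(y4,w4) \<notin> A"
    and M1_4: "\<And>z. (y4,z) \<in> A \<Longrightarrow> (z,y5) \<in> A \<Longrightarrow> z \<in> K4"
    and M2_4: "\<And>z. z \<noteq> y5 \<Longrightarrow> (y4,z) \<in> A \<Longrightarrow> (z,w4) \<in> A \<Longrightarrow> z \<in> K4"
    and M3_4: "\<And>z. z \<noteq> y4 \<Longrightarrow> (w4,z) \<in> A \<Longrightarrow> (z,y5) \<in> A \<Longrightarrow> z \<in> K4"
    and KT_4: "\<And>p q r. p \<in> K4 \<Longrightarrow> q \<in> K4 \<Longrightarrow> r \<in> K4 \<Longrightarrow> (p,q) \<in> A \<Longrightarrow> (q,r) \<in> A \<Longrightarrow> (r,p) \<in> A \<Longrightarrow> False"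
    using wit[OF dc sc a_4_5 n_5_4] by blast
  note facts = Btri[OF dc, of w0 w2 y3 y4 w3]
    Btri[OF dc, of w0 y2 y0 w2 w3]
    Btri[OF dc, of w0 y2 y0 w3 w2]
    Btri[OF dc, of w0 y3 y0 y2 w1]
    Btri[OF dc, of w0 y4 y0 y2 w1]
    Btri[OF dc, of w0 y4 y2 y3 w2]
    Btri[OF dc, of w0 y5 y3 y4 w3]
    Btri[OF dc, of w1 w2 y3 y4 w3]
    Btri[OF dc, of w1 w3 y0 y4 w2]
    Btri[OF dc, of w1 w3 y4 y5 w4]
    Btri[OF dc, of w1 y3 y0 y1 w0]
    Btri[OF dc, of w1 y4 y0 y1 w0]
    Btri[OF dc, of w1 y4 y0 y3 w2]
    Btri[OF dc, of w2 w0 y1 y2 w1]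
    Btri[OF dc, of w2 w3 y1 y2 w1]
    Btri[OF dc, of w2 y2 y0 y1 w0]
    Btri[OF dc, of w2 y4 y0 y1 w0]
    Btri[OF dc, of w2 y4 y1 y2 w1]
    Btri[OF dc, of w2 y5 y0 y2 w0]
    Btri[OF dc, of w2 y5 y1 y2 w1]
    Btri[OF dc, of w3 w0 y1 y3 w1]
    Btri[OF dc, of w3 w0 y2 y3 w2]
    Btri[OF dc, of w3 w1 y0 y3 w0]
    Btri[OF dc, of w3 w1 y2 y3 w2]
    Btri[OF dc, of w3 w2 y0 y1 w0]
    Btri[OF dc, of w3 w4 y2 y3 w2]
    Btri[OF dc, of w3 y2 y0 y1 w0]
    Btri[OF dc, of w3 y2 y0 y1 w2]
    Btri[OF dc, of w3 y3 y0 y1 w0]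
    Btri[OF dc, of w3 y3 y1 y2 w1]
    Btri[OF dc, of w4 w2 y3 y4 w3]
    Btri[OF dc, of w4 w3 y2 y4 w2]
    Btri[OF dc, of y0 w1 y2 y3 w2]
    Btri[OF dc, of y0 w1 y3 y4 w3]
    Btri[OF dc, of y0 w2 y1 y3 w1]
    Btri[OF dc, of y0 w2 y3 y4 w3]
    Btri[OF dc, of y0 w2 y4 y5 w4]
    Btri[OF dc, of y0 w3 y1 y2 w1]
    Btri[OF dc, of y0 w3 y2 y4 w2]
    Btri[OF dc, of y0 y3 y1 y2 w1]
    Btri[OF dc, of y0 y3 y1 y2 w3]
    Btri[OF dc, of y0 y4 y1 y2 w1]
    Btri[OF dc, of y0 y4 y2 y3 w2]
    Btri[OF dc, of y0 y4 y2 y3 w4]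
    Btri[OF dc, of y0 y5 y1 y2 w1]
    Btri[OF dc, of y0 y5 y2 y3 w2]
    Btri[OF dc, of y0 y5 y2 y4 w3]
    Btri[OF dc, of y1 w0 y2 y4 w2]
    Btri[OF dc, of y1 w0 y3 y4 w3]
    Btri[OF dc, of y1 w2 y3 y4 w0]
    Btri[OF dc, of y1 w2 y3 y4 w3]
    Btri[OF dc, of y1 w3 y2 y4 w0]
    Btri[OF dc, of y1 w3 y2 y4 w2]
    Btri[OF dc, of y1 y3 y2 w3 w0]
    Btri[OF dc, of y1 y4 y2 y3 w0]
    Btri[OF dc, of y1 y4 y2 y3 w2]
    Btri[OF dc, of y1 y5 y2 y3 w2]
    Btri[OF dc, of y1 y5 y2 y4 w0]
    Btri[OF dc, of y1 y5 y3 y4 w3]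
    Btri[OF dc, of y2 w0 y3 y4 w1]
    Btri[OF dc, of y2 w1 y3 y4 w3]
    Btri[OF dc, of y2 w3 y4 w0 w1]
    Btri[OF dc, of y2 w3 y4 y5 w4]
    Btri[OF dc, of y2 w4 y3 y5 w3]
    Btri[OF dc, of y2 y4 y3 w0 w1]
    Btri[OF dc, of y2 y4 y3 w4 w1]
    Btri[OF dc, of y2 y5 y3 y4 w3]
    Btri[OF dc, of y2 y5 y4 w0 w1]
    Btri[OF dc, of y3 w2 y4 y5 w4]
    KT_0[of y2 y3 w2]
    KT_1[of y0 w2 w0]
    KT_1[of y0 w2 w3]
    KT_1[of y0 w3 w0]
    KT_1[of y0 w3 w2]
    KT_1[of y0 y3 w0]
    KT_1[of y0 y3 w2]
    KT_1[of y0 y4 w0]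
    KT_1[of y0 y5 w0]
    KT_1[of y3 y4 w0]
    KT_1[of y3 y4 w3]
    KT_2[of y0 y1 w0]
    KT_2[of y0 y1 w3]
    KT_2[of y0 y4 w3]
    KT_2[of y1 w0 w1]
    KT_2[of y1 w3 w1]
    KT_2[of y1 y4 w1]
    KT_2[of y1 y4 w3]
    KT_2[of y1 y5 w1]
    KT_2[of y4 w1 w0]
    KT_2[of y4 y5 w0]
    KT_2[of y4 y5 w4]
    KT_3[of y0 y1 w0]
    KT_3[of y0 y2 w1]
    KT_3[of y0 y5 w4]
    KT_3[of y1 y5 w1]
    KT_3[of y2 y5 w2]
    KT_3[of y2 y5 w4]
    KT_3[of y5 w0 w1]
    M1_0[of w2]
    M1_1[of w0]
    M1_1[of w2]
    M1_1[of w3]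
    M1_2[of w0]
    M1_2[of w1]
    M1_2[of w3]
    M1_2[of w4]
    M1_3[of w4]
    M2_0[of y2]
    M2_0[of y3]
    M2_1[of w0]
    M2_1[of y3]
    M2_1[of y4]
    M2_1[of y5]
    M2_2[of w0]
    M2_2[of w1]
    M2_2[of y4]
    M2_2[of y5]
    M2_3[of w0]
    M2_3[of w1]
    M2_3[of w2]
    M2_3[of y5]
    M3_1[of w2]
    M3_1[of w3]
    M3_1[of y0]
    M3_2[of w3]
    M3_2[of w4]
    M3_2[of y0]
    M3_2[of y1]
    M3_3[of w1]
    M3_3[of w4]
    M3_3[of y0]
    M3_3[of y1]
    M3_3[of y2]
    sc_inst[OF sc w0V w1V]
    sc_inst[OF sc w0V w2V]
    sc_inst[OF sc w0V w3V]
    sc_inst[OF sc w1V w2V]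
    sc_inst[OF sc w1V w3V]
    sc_inst[OF sc w1V w4V]
    sc_inst[OF sc w2V w3V]
    sc_inst[OF sc w2V w4V]
    sc_inst[OF sc w3V w4V]
    sc_inst[OF sc y0V w1V]
    sc_inst[OF sc y0V w2V]
    sc_inst[OF sc y0V w3V]
    sc_inst[OF sc y0V w4V]
    sc_inst[OF sc y1V w2V]
    sc_inst[OF sc y1V w3V]
    sc_inst[OF sc y2V w0V]
    sc_inst[OF sc y2V w3V]
    sc_inst[OF sc y2V w4V]
    sc_inst[OF sc y3V w0V]
    sc_inst[OF sc y3V w1V]
    sc_inst[OF sc y3V w4V]
    sc_inst[OF sc y4V w0V]
    sc_inst[OF sc y4V w1V]
    sc_inst[OF sc y4V w2V]
    sc_inst[OF sc y5V w0V]
    sc_inst[OF sc y5V w1V]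
    sc_inst[OF sc y5V w2V]
    sc_inst[OF sc y5V w3V]
    W_0
    W_1
    W_2
    W_3
    W_4
    dc_irr[OF dc, of w0]
    dc_irr[OF dc, of w1]
    dc_irr[OF dc, of w2]
    dc_irr[OF dc, of w3]
    dc_irr[OF dc, of w4]
    dc_irr[OF dc, of y0]
    dc_irr[OF dc, of y1]
    dc_irr[OF dc, of y2]
    dc_irr[OF dc, of y3]
    dc_irr[OF dc, of y4]
    dc_irr[OF dc, of y5]
  show False using facts assms by smt
qed




theorem lemma26:
  fixes V :: "'a set" and A :: "('a \<times> 'a) set"
  assumes "dicritical3 V A" and "semicomplete V A"
  shows "\<not> (\<exists>a b. (a, b) \<in> TT8 \<and> contains_induced V A {0..<8} (T8_rev a b))"
proof
  assume "\<exists>a b. (a, b) \<in> TT8 \<and> contains_induced V A {0..<8} (T8_rev a b)"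
  then obtain a b where ab: "(a,b) \<in> TT8" and ci: "contains_induced V A {0..<8} (T8_rev a b)"
    by blast
  from ci obtain f where fV: "f ` {0..<8} \<subseteq> V"
    and fA0: "\<forall>x\<in>{0..<8}. \<forall>y\<in>{0..<8}. (f x, f y) \<in> A \<longleftrightarrow> (x, y) \<in> T8_rev a b"
    unfolding contains_induced_def by blast
  have fA: "(f x, f y) \<in> A \<longleftrightarrow> (x, y) \<in> T8_rev a b" if "x \<in> {0..<8}" "y \<in> {0..<8}" for x y
    using fA0 that by blast
  have ab': "a < b" "b < 8" using ab by (auto simp: TT8_def)
  define g :: "nat \<Rightarrow> nat" where "g k = (if k < a then k else k + 2)" for k
  define h where "h k = f (g k)" for k
  have g8: "k < 6 \<Longrightarrow> g k < 8" for k using ab' by (auto simp: g_def)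
  have hV: "k < 6 \<Longrightarrow> h k \<in> V" for k using fV g8 by (auto simp: h_def)
  have gT: "k < 6 \<Longrightarrow> l < 6 \<Longrightarrow> (g k, g l) \<in> T8_rev a b \<longleftrightarrow> k < l" for k l
    using ab' by (auto simp: g_def T8_rev_def TT8_def)
  have H: "k < 6 \<Longrightarrow> l < 6 \<Longrightarrow> (h k, h l) \<in> A \<longleftrightarrow> k < l" for k l
    using fA[of "g k" "g l"] g8[of k] g8[of l] gT[of k l] by (auto simp: h_def)
  show False
    by (rule noTT6[OF assms(1,2), of "h 0" "h 1" "h 2" "h 3" "h 4" "h 5"]) (simp_all add: H hV)
qed



end
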